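(* Let $C_1$ and $C_2$ be two linear MDS codes of the same length $n$ over $\mathbb{F}_q$. If $C_1\not\subseteq C_2$, then $wt(C_1\setminus(C_1\cap C_2))=wt(C_1)$.
   Context: An $[n,k,d]_q$ linear code is a $k$-dimensional subspace of $\mathbb{F}_q^n$ with minimum Hamming distance $d$; it is MDS if $d=n-k+1$. For a subset $\mathcal{A}\subseteq\mathbb{F}_q^n$, $wt(\mathcal{A})=\min\{wt(\bm a):\bm a\in\mathcal{A}\setminus\{\bm 0\}\}$, where $wt(\bm a)$ is the Hamming weight (number of nonzero coordinates). *)

theory Defs
  imports "HOL-Analysis.Analysis"
begin

text \<open>Vectors of length n over F_q are modelled as 'a ^ 'n with 'a a finite field
  and 'n a finite index type with CARD('n) = n.\<close>

definition hwt :: "'a::zero ^ 'n::finite \<Rightarrow> nat" where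
  "hwt v = card {i. v $ i \<noteq> 0}"

definition wt_set :: "('a::zero ^ 'n::finite) set \<Rightarrow> nat" where
  "wt_set A = Min (hwt ` (A - {0}))"

definition linear_code :: "('a::{finite,field} ^ 'n::finite) set \<Rightarrow> bool" where
  "linear_code C \<longleftrightarrow> vec.subspace C"

definition MDS_code :: "('a::{finite,field} ^ 'n::finite) set \<Rightarrow> bool" where
  "MDS_code C \<longleftrightarrow> linear_code C \<and> wt_set C = CARD('n) - vec.dim C + 1"

end

theory Submission imports Defs begin

lemma proj_linear:
  "Vector_Spaces.linear ((*s)) ((*s)) (\<lambda>x::'a::field^'n. \<chi> i. if i \<in> S then x$i else 0)"
  by (auto simp: Vector_Spaces.linear_iff vec.vector_space_axioms vec_eq_iff)

lemma proj_span:
  fixes x :: "'a::field^'n"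
  shows "(\<chi> i. if i \<in> S then x$i else 0) = (\<Sum>i\<in>S. x$i *s axis i 1)"
  by (auto simp: vec_eq_iff sum_component axis_def if_distrib[of "(*) _"] sum.delta cong: if_cong)

lemma kernel_exists:
  fixes C :: "('a::field ^ 'n) set"
  assumes "vec.subspace C" "card S < vec.dim C"
  shows "\<exists>x\<in>C. x \<noteq> 0 \<and> (\<forall>i\<in>S. x$i = 0)"
proof (rule ccontr)
  assume H: "\<not> ?thesis"
  let ?f = "\<lambda>x::'a^'n. \<chi> i. if i \<in> S then x$i else 0"
  have inj: "inj_on ?f (vec.span C)"
  proof (rule inj_onI)
    fix x y assume xy: "x \<in> vec.span C" "y \<in> vec.span C" "?f x = ?f y"
    have "x - y \<in> C" using xy assms(1) vec.span_eq_iff vec.subspace_diff by metis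
    moreover have "\<forall>i\<in>S. (x - y)$i = 0"
    proof
      fix i assume "i \<in> S"
      have "?f x $ i = ?f y $ i" using xy(3) by simp
      then show "(x - y)$i = 0" using \<open>i \<in> S\<close> by simp
    qed
    ultimately show "x = y" using H by auto
  qed
  have "vec.dim (?f ` C) = vec.dim C"
    by (rule vec.dim_image_eq[OF proj_linear inj])
  moreover have "vec.dim (?f ` C) \<le> card ((\<lambda>i. axis i (1::'a)) ` S)"
    apply (rule vec.dim_le_card)
     apply (clarsimp simp: proj_span)
     apply (rule vec.span_sum)
     apply (rule vec.span_scale)
     apply (rule vec.span_base)
     apply simp
    apply simp
    done
  moreover have "card ((\<lambda>i. axis i (1::'a)) ` S) \<le> card S"
    by (rule card_image_le) simp
  ultimately show False using assms(2) by linarith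
qed
lemma hwt_le: "hwt (v::'a::zero^'n) \<le> CARD('n)"
  unfolding hwt_def by (rule card_mono) auto

lemma hwt_Z: "card {i. (v::'a::zero^'n) $ i = 0} = CARD('n) - hwt v"
proof -
  have "card {i. v $ i = 0} + hwt v = CARD('n)"
    unfolding hwt_def
    by (subst card_Un_disjoint[symmetric]) (auto intro: arg_cong[where f=card])
  then show ?thesis by linarith
qed

lemma hwt_less:
  assumes "{i. (u::'a::zero^'n) $ i \<noteq> 0} \<subseteq> {i. v $ i \<noteq> 0} - {j}" "v $ j \<noteq> 0"
  shows "hwt u < hwt v"
  unfolding hwt_def
  by (rule psubset_card_mono) (use assms in auto)

lemma descent:
  fixes C1 C2 :: "('a::field ^ 'n) set"
  assumes S1: "vec.subspace C1" and S2: "vec.subspace C2"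
  shows "\<forall>c. c \<in> C1 \<longrightarrow> c \<notin> C2 \<longrightarrow> hwt c = w \<longrightarrow>
     (\<exists>x\<in>C1. x \<notin> C2 \<and> hwt x \<le> CARD('n) - vec.dim C1 + 1)"
proof (induction w rule: less_induct)
  case (less w)
  show ?case
  proof (intro allI impI)
    fix c assume c: "c \<in> C1" "c \<notin> C2" "hwt c = w"
    show "\<exists>x\<in>C1. x \<notin> C2 \<and> hwt x \<le> CARD('n) - vec.dim C1 + 1"
    proof (cases "hwt c \<le> CARD('n) - vec.dim C1 + 1")
      case True then show ?thesis using c by blast
    next
      case False
      have IH: "\<And>c'. c' \<in> C1 \<Longrightarrow> c' \<notin> C2 \<Longrightarrow> hwt c' < w \<Longrightarrow>
          \<exists>x\<in>C1. x \<notin> C2 \<and> hwt x \<le> CARD('n) - vec.dim C1 + 1"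
        using less by blast
      have "hwt c > 0" using False by linarith
      then have "{i. c $ i \<noteq> 0} \<noteq> {}" unfolding hwt_def by (metis card.empty less_irrefl)
      then obtain j where j: "c $ j \<noteq> 0" by blast
      define Z where "Z = {i. c $ i = 0}"
      have cZ: "card Z = CARD('n) - hwt c" unfolding Z_def by (rule hwt_Z)
      have "card (insert j Z) = card Z + 1"
        using j by (simp add: Z_def)
      also have "\<dots> < vec.dim C1" using cZ False hwt_le[of c] by linarith
      finally obtain y where y: "y \<in> C1" "y \<noteq> 0" "\<forall>i\<in>insert j Z. y $ i = 0"
        using kernel_exists[OF S1] by blast
      have ysupp: "{i. y $ i \<noteq> 0} \<subseteq> {i. c $ i \<noteq> 0} - {j}"
        using y(3) by (auto simp: Z_def)
      show ?thesis
      proof (cases "y \<in> C2")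
        case False
        have "hwt y < w" using hwt_less[OF ysupp j] c(3) by simp
        then show ?thesis using IH y(1) False by blast
      next
        case True
        obtain i where i: "y $ i \<noteq> 0" using y(2) by (metis vec_eq_iff zero_index)
        have ci: "c $ i \<noteq> 0" using i y(3) by (auto simp: Z_def)
        define c' where "c' = c - (c $ i / y $ i) *s y"
        have "c' \<in> C1" unfolding c'_def
          by (intro vec.subspace_diff[OF S1] c(1) vec.subspace_scale[OF S1] y(1))
        moreover have "c' \<notin> C2"
        proof
          assume "c' \<in> C2"
          then have "c' + (c $ i / y $ i) *s y \<in> C2"
            by (intro vec.subspace_add[OF S2] vec.subspace_scale[OF S2] True)
          then show False using c(2) by (simp add: c'_def)
        qed
        moreover have "hwt c' < w"
        proof -
          have "{k. c' $ k \<noteq> 0} \<subseteq> {k. c $ k \<noteq> 0} - {i}"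
            using y(3) i by (auto simp: c'_def Z_def)
          then show ?thesis using hwt_less[OF _ ci] c(3) by simp
        qed
        ultimately show ?thesis using IH by blast
      qed
    qed
  qed
qed

theorem lemma4:
  fixes C1 C2 :: "('a::{finite,field} ^ 'n::finite) set"
  assumes "MDS_code C1" and "MDS_code C2"
    and "\<not> C1 \<subseteq> C2"
  shows "wt_set (C1 - (C1 \<inter> C2)) = wt_set C1"
proof -
  have S1: "vec.subspace C1" and S2: "vec.subspace C2"
    using assms(1,2) by (auto simp: MDS_code_def linear_code_def)
  have d: "wt_set C1 = CARD('n) - vec.dim C1 + 1"
    using assms(1) by (simp add: MDS_code_def)
  obtain c where c: "c \<in> C1" "c \<notin> C2" using assms(3) by blast
  obtain x where x: "x \<in> C1" "x \<notin> C2" "hwt x \<le> CARD('n) - vec.dim C1 + 1"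
    using descent[OF S1 S2] c by blast
  have x0: "x \<noteq> 0" using x(2) vec.subspace_0[OF S2] by auto
  let ?A = "hwt ` ((C1 - (C1 \<inter> C2)) - {0})"
  let ?B = "hwt ` (C1 - {0})"
  have fin: "finite ?B" by simp
  have AB: "?A \<subseteq> ?B" by auto
  have xA: "hwt x \<in> ?A" using x x0 by auto
  have "Min ?B \<le> Min ?A" by (rule Min_antimono[OF AB]) (use xA fin in auto)
  moreover have "Min ?A \<le> hwt x" by (rule Min_le) (use xA in auto)
  ultimately show ?thesis using d x(3) unfolding wt_set_def by linarith
qed

end
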